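(* For each integer $r\ge3$, with $n=2^r+3$, the codewords $|\bar0\rangle=\tfrac{1}{\sqrt{2^{r+1}}}\big(\sqrt{2^r-3}\,|D^{n}_0\rangle+\sqrt{2^r+3}\,|D^{n}_{2^r}\rangle\big)$, $|\bar1\rangle=\tfrac{1}{\sqrt{2^{r+1}}}\big(\sqrt{2^r+3}\,|D^{n}_3\rangle+\sqrt{2^r-3}\,|D^{n}_{n}\rangle\big)$ span a non-additive permutationally invariant $((2^r+3,2,3))$ $n$-qubit code with transversal group $\mathsf{Q}^{(r)}$, i.e. a $((2^r+3,2,3,\mathsf{Q}^{(r)}))$ code.
   Context: $|D^n_w\rangle$ is the normalized uniform superposition of all $n$-qubit computational basis states of Hamming weight $w$. An $((n,K,d))$ code is a $K$-dimensional subspace of $n$ qubits with $\langle\phi|E|\psi\rangle=c_E\langle\phi|\psi\rangle$ for all codewords and all Pauli $E$ of weight $<d$ ($c_E$ independent of codewords). Non-additive = not a stabilizer code. Permutationally invariant: codewords invariant under all qubit permutations. With $\mathsf{X}=\begin{pmatrix}0&-i\\-i&0\end{pmatrix}$, $\mathsf{Z}=\mathrm{diag}(-i,i)$, $\mathsf{Ph}(\alpha)=\mathrm{diag}(e^{-i\alpha/2},e^{i\alpha/2})$, the generalized quaternion group is $\mathsf{Q}^{(r)}=\mathsf{BD}_{2^r}=\langle\mathsf{X},\mathsf{Z},\mathsf{Ph}(2\pi/2^r)\rangle$ (order $2^{r+2}$); e.g. $\mathsf{Q}^{(3)}$ contains $\mathsf{T}=\mathsf{Ph}(\pi/4)$.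 A code with encoding isometry $V$ has transversal group $\mathsf{G}\subset\mathrm{SU}(2)$ ($\mathsf{G}$-transversal) if $g^{\otimes n}V=V\lambda(g)$ for all $g\in\mathsf{G}$, for a faithful two-dimensional irreducible representation $\lambda$ of $\mathsf{G}$. *)

theory Defs
  imports Complex_Main
begin

text \<open>An n-qubit state is a function nat => complex supported on
  the computational basis indices x < 2^n; qubit i of basis state x is bit i of x.
  A single-qubit operator is a 2x2 complex matrix indexed by bool
  (False = |0>, True = |1>), entry A a b = <a|A|b>.\<close>

type_synonym qstate = "nat \<Rightarrow> complex"
type_synonym mat2 = "bool \<Rightarrow> bool \<Rightarrow> complex"

definition supported :: "nat \<Rightarrow> qstate \<Rightarrow> bool" where
  "supported n \<psi> \<longleftrightarrow> (\<forall>x\<ge>2^n. \<psi> x = 0)"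

definition qinner :: "nat \<Rightarrow> qstate \<Rightarrow> qstate \<Rightarrow> complex" where
  "qinner n \<phi> \<psi> = (\<Sum>x<2^n. cnj (\<phi> x) * \<psi> x)"

definition tensor_apply :: "nat \<Rightarrow> (nat \<Rightarrow> mat2) \<Rightarrow> qstate \<Rightarrow> qstate" where
  "tensor_apply n A \<psi> = (\<lambda>x. if x < 2^n then
      (\<Sum>y<2^n. (\<Prod>i<n. A i (bit x i) (bit y i)) * \<psi> y) else 0)"

definition hweight :: "nat \<Rightarrow> nat \<Rightarrow> nat" where
  "hweight n x = card {i. i < n \<and> bit x i}"

definition dicke :: "nat \<Rightarrow> nat \<Rightarrow> qstate" where
  "dicke n w = (\<lambda>x. if x < 2^n \<and> hweight n x = w
                     then complex_of_real (1 / sqrt (real (n choose w))) else 0)"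

text \<open>Single-qubit Pauli matrices: 0 = I, 1 = X, 2 = Y, 3 = Z (standard Hermitian ones).\<close>
definition pauli1 :: "nat \<Rightarrow> mat2" where
  "pauli1 k = (\<lambda>a b.
     if k = 1 then (if a \<noteq> b then 1 else 0)
     else if k = 2 then (if a = b then 0 else if a then \<i> else - \<i>)
     else if k = 3 then (if a = b then (if a then -1 else 1) else 0)
     else (if a = b then 1 else 0))"

definition pauli_string :: "nat \<Rightarrow> (nat \<Rightarrow> nat) \<Rightarrow> bool" where
  "pauli_string n p \<longleftrightarrow> (\<forall>i<n. p i < 4)"

definition pauli_weight :: "nat \<Rightarrow> (nat \<Rightarrow> nat) \<Rightarrow> nat" where
  "pauli_weight n p = card {i. i < n \<and> p i \<noteq> 0}"

definition pauli_op :: "nat \<Rightarrow> (nat \<Rightarrow> nat) \<Rightarrow> qstate \<Rightarrow> qstate" where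
  "pauli_op n p = tensor_apply n (\<lambda>i. pauli1 (p i))"

definition cspan_list :: "qstate list \<Rightarrow> qstate set" where
  "cspan_list B = {(\<lambda>x. \<Sum>j<length B. a j * (B ! j) x) | a. True}"

definition orthonormal_list :: "nat \<Rightarrow> qstate list \<Rightarrow> bool" where
  "orthonormal_list n B \<longleftrightarrow> (\<forall>j<length B. supported n (B ! j)) \<and>
     (\<forall>j<length B. \<forall>k<length B. qinner n (B ! j) (B ! k) = (if j = k then 1 else 0))"

definition qcode :: "nat \<Rightarrow> nat \<Rightarrow> nat \<Rightarrow> qstate set \<Rightarrow> bool" where
  "qcode n K d C \<longleftrightarrow>
     (\<exists>B. length B = K \<and> orthonormal_list n B \<and> C = cspan_list B) \<and>
     (\<forall>p. pauli_string n p \<and> pauli_weight n p < d \<longrightarrow>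
        (\<exists>c. \<forall>\<phi>\<in>C. \<forall>\<psi>\<in>C. qinner n \<phi> (pauli_op n p \<psi>) = c * qinner n \<phi> \<psi>))"

definition pauli_group :: "nat \<Rightarrow> (qstate \<Rightarrow> qstate) set" where
  "pauli_group n = {(\<lambda>\<psi> x. \<i> ^ k * pauli_op n p \<psi> x) | k p. pauli_string n p}"

definition minus_id :: "nat \<Rightarrow> qstate \<Rightarrow> qstate" where
  "minus_id n = (\<lambda>\<psi> x. if x < 2^n then - \<psi> x else 0)"

definition stabilizer_group :: "nat \<Rightarrow> (qstate \<Rightarrow> qstate) set \<Rightarrow> bool" where
  "stabilizer_group n S \<longleftrightarrow> S \<subseteq> pauli_group n \<and>
     (\<forall>g\<in>S. \<forall>h\<in>S. g \<circ> h \<in> S) \<and>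
     (\<forall>g\<in>S. \<forall>h\<in>S. g \<circ> h = h \<circ> g) \<and>
     minus_id n \<notin> S"

definition stabilizer_code :: "nat \<Rightarrow> qstate set \<Rightarrow> bool" where
  "stabilizer_code n C \<longleftrightarrow> (\<exists>S. stabilizer_group n S \<and>
     C = {\<psi>. supported n \<psi> \<and> (\<forall>g\<in>S. g \<psi> = \<psi>)})"

definition perm_state :: "nat \<Rightarrow> (nat \<Rightarrow> nat) \<Rightarrow> qstate \<Rightarrow> qstate" where
  "perm_state n \<pi> \<psi> = (\<lambda>x. if x < 2^n then
      \<psi> (\<Sum>i<n. if bit x (\<pi> i) then 2^i else 0) else 0)"

definition perm_invariant :: "nat \<Rightarrow> qstate set \<Rightarrow> bool" where
  "perm_invariant n C \<longleftrightarrow> (\<forall>\<psi>\<in>C. \<forall>\<pi>. bij_betw \<pi> {..<n} {..<n} \<longrightarrow>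
      perm_state n \<pi> \<psi> = \<psi>)"

definition mmul :: "mat2 \<Rightarrow> mat2 \<Rightarrow> mat2" where
  "mmul A B = (\<lambda>a b. A a False * B False b + A a True * B True b)"

definition mdet :: "mat2 \<Rightarrow> complex" where
  "mdet A = A False False * A True True - A False True * A True False"

definition mvec :: "mat2 \<Rightarrow> (bool \<Rightarrow> complex) \<Rightarrow> (bool \<Rightarrow> complex)" where
  "mvec A v = (\<lambda>a. A a False * v False + A a True * v True)"

inductive_set mgen :: "mat2 set \<Rightarrow> mat2 set" for S where
  base: "g \<in> S \<Longrightarrow> g \<in> mgen S"
| mult: "g \<in> mgen S \<Longrightarrow> h \<in> mgen S \<Longrightarrow> mmul g h \<in> mgen S"

definition sfX :: mat2 where
  "sfX = (\<lambda>a b. if a = b then 0 else - \<i>)"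

definition sfZ :: mat2 where
  "sfZ = (\<lambda>a b. if a = b then (if a then \<i> else - \<i>) else 0)"

definition sfPh :: "real \<Rightarrow> mat2" where
  "sfPh \<alpha> = (\<lambda>a b. if a = b then (if a then cis (\<alpha>/2) else cis (- \<alpha>/2)) else 0)"

text \<open>Q^(r) = BD_{2^r} = <X, Z, Ph(2 pi / 2^r)> (finite, so closure under products is the group).\<close>
definition quatgroup :: "nat \<Rightarrow> mat2 set" where
  "quatgroup r = mgen {sfX, sfZ, sfPh (2 * pi / 2^r)}"

definition faithful_irrep2 :: "mat2 set \<Rightarrow> (mat2 \<Rightarrow> mat2) \<Rightarrow> bool" where
  "faithful_irrep2 G rho \<longleftrightarrow>
     (\<forall>g\<in>G. \<forall>h\<in>G. rho (mmul g h) = mmul (rho g) (rho h)) \<and>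
     (\<forall>g\<in>G. mdet (rho g) \<noteq> 0) \<and>
     inj_on rho G \<and>
     \<not> (\<exists>v. v \<noteq> (\<lambda>_. 0) \<and> (\<forall>g\<in>G. \<exists>\<mu>. mvec (rho g) v = (\<lambda>a. \<mu> * v a)))"

text \<open>G-transversality of the code with encoding isometry V|j> = c j:
  g^{(x)n} V = V lambda(g).\<close>
definition transversal :: "nat \<Rightarrow> (bool \<Rightarrow> qstate) \<Rightarrow> mat2 set \<Rightarrow> bool" where
  "transversal n c G \<longleftrightarrow> orthonormal_list n [c False, c True] \<and>
     (\<exists>rho. faithful_irrep2 G rho \<and>
        (\<forall>g\<in>G. \<forall>j. tensor_apply n (\<lambda>_. g) (c j) =
            (\<lambda>x. rho g False j * c False x + rho g True j * c True x)))"

definition cw0 :: "nat \<Rightarrow> qstate" where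
  "cw0 r = (let n = 2^r + 3 in (\<lambda>x.
     complex_of_real (sqrt ((2::real)^r - 3) / sqrt (2^(r+1))) * dicke n 0 x +
     complex_of_real (sqrt ((2::real)^r + 3) / sqrt (2^(r+1))) * dicke n (2^r) x))"

definition cw1 :: "nat \<Rightarrow> qstate" where
  "cw1 r = (let n = 2^r + 3 in (\<lambda>x.
     complex_of_real (sqrt ((2::real)^r + 3) / sqrt (2^(r+1))) * dicke n 3 x +
     complex_of_real (sqrt ((2::real)^r - 3) / sqrt (2^(r+1))) * dicke n n x))"

end

theory Submission
  imports Defs "HOL-Library.Nat_Bijection" "HOL-Number_Theory.Cong"
begin

lemma dec_bit: "i \<in> set_decode x \<longleftrightarrow> bit x i"
  by (simp add: set_decode_def bit_iff_odd)

lemma dec_sub: "(x::nat) < 2^n \<Longrightarrow> set_decode x \<subseteq> {..<n}"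
proof
  fix i assume x: "x < 2^n" and "i \<in> set_decode x"
  hence "odd (x div 2^i)" by (simp add: set_decode_def)
  show "i \<in> {..<n}"
  proof (rule ccontr)
    assume "i \<notin> {..<n}"
    hence "(2::nat)^n \<le> 2^i" by (intro power_increasing) auto
    with x have "x < 2^i" by linarith
    hence "x div 2^i = 0" by (rule div_less)
    with \<open>odd (x div 2^i)\<close> show False by simp
  qed
qed

lemma enc_le: "finite A \<Longrightarrow> A \<subseteq> B \<Longrightarrow> finite B \<Longrightarrow> set_encode A \<le> set_encode B"
  unfolding set_encode_def by (rule sum_mono2) auto

lemma enc_less: "A \<subseteq> {..<n} \<Longrightarrow> set_encode A < 2^n"
proof -
  assume A: "A \<subseteq> {..<n}"
  hence "set_encode A \<le> set_encode {..<n}" by (intro enc_le) (auto intro: finite_subset)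
  also have "set_encode {..<n} = 2^n - 1"
    using sum_power2[of n] by (simp add: set_encode_def atLeast0LessThan)
  finally show ?thesis by (metis le_less_trans diff_less one_less_numeral_iff pos2 semiring_norm(76) zero_less_power zero_less_one)
qed

lemma bij_enc: "bij_betw set_encode (Pow {..<n}) {..<(2::nat)^n}"
proof (rule bij_betw_byWitness[where f' = set_decode])
  show "\<forall>a\<in>Pow {..<n}. set_decode (set_encode a) = a"
    by (metis PowD finite_lessThan finite_subset set_encode_inverse)
  show "\<forall>a'\<in>{..<2 ^ n}. set_encode (set_decode a') = a'" by simp
  show "set_encode ` Pow {..<n} \<subseteq> {..<2 ^ n}" using enc_less by auto
  show "set_decode ` {..<2 ^ n} \<subseteq> Pow {..<n}" using dec_sub by auto
qed

lemma sum_enc: "(\<Sum>x<(2::nat)^n. h x) = (\<Sum>X\<in>Pow {..<n}. h (set_encode X))"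
  using sum.reindex_bij_betw[OF bij_enc, of h n] by simp

lemma bit_enc: "A \<subseteq> {..<n} \<Longrightarrow> bit (set_encode A) i \<longleftrightarrow> i \<in> A"
  by (metis dec_bit finite_lessThan finite_subset set_encode_inverse)

lemma hweight_dec: "(x::nat) < 2^n \<Longrightarrow> hweight n x = card (set_decode x)"
proof -
  assume "x < 2^n"
  hence "{i. i < n \<and> bit x i} = set_decode x" using dec_sub dec_bit by blast
  thus ?thesis by (simp add: hweight_def)
qed

lemma hweight_enc: "A \<subseteq> {..<n} \<Longrightarrow> hweight n (set_encode A) = card A"
  by (metis enc_less hweight_dec set_encode_inverse finite_lessThan finite_subset)

definition Wf :: "nat \<Rightarrow> (nat \<Rightarrow> complex) \<Rightarrow> qstate" where
  "Wf n F = (\<lambda>x. if x < 2^n then F (hweight n x) else 0)"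

lemma Wf_enc: "A \<subseteq> {..<n} \<Longrightarrow> Wf n F (set_encode A) = F (card A)"
  by (simp add: Wf_def enc_less hweight_enc)

lemma tensor_enc: "X \<subseteq> {..<n} \<Longrightarrow> tensor_apply n A \<psi> (set_encode X) =
   (\<Sum>Y\<in>Pow {..<n}. (\<Prod>i<n. A i (i \<in> X) (i \<in> Y)) * \<psi> (set_encode Y))"
  unfolding tensor_apply_def using enc_less[of X n]
  by (simp add: sum_enc bit_enc)

lemma sum_card: "finite B \<Longrightarrow> (\<Sum>R\<in>Pow B. h (card R)) = (\<Sum>m\<le>card B. of_nat (card B choose m) * h m)"
proof -
  assume fB: "finite B"
  have "(\<Sum>R\<in>Pow B. h (card R)) = (\<Sum>m\<le>card B. \<Sum>R\<in>{R\<in>Pow B. card R = m}. h (card R))"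
    by (rule sum.group[symmetric]) (auto simp: fB card_mono)
  also have "\<dots> = (\<Sum>m\<le>card B. of_nat (card B choose m) * h m)"
  proof (rule sum.cong[OF refl])
    fix m
    have "{R\<in>Pow B. card R = m} = {R. R \<subseteq> B \<and> card R = m}" by auto
    hence "card {R\<in>Pow B. card R = m} = card B choose m" using n_subsets[OF fB] by simp
    thus "(\<Sum>R\<in>{R\<in>Pow B. card R = m}. h (card R)) = of_nat (card B choose m) * h m"
      by simp
  qed
  finally show ?thesis .
qed

lemma fin_sub: "A \<subseteq> {..<(n::nat)} \<Longrightarrow> finite A"
  using finite_subset by blast

lemma sum_remove_zero:
  assumes "finite S" "a \<in> S" "\<And>x. x \<in> S \<Longrightarrow> x \<noteq> a \<Longrightarrow> h x = 0"
  shows "sum h S = h a"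
  using assms by (simp add: sum.remove)

lemma tensor_mono:
  assumes X: "X \<subseteq> {..<n}" and mono: "\<forall>i<n. \<forall>a b. b \<noteq> (a \<noteq> f i) \<longrightarrow> A i a b = 0"
  shows "tensor_apply n A \<psi> (set_encode X) =
    (\<Prod>i<n. A i (i\<in>X) ((i\<in>X) \<noteq> f i)) * \<psi> (set_encode {i. i<n \<and> (i\<in>X) \<noteq> f i})"
proof -
  let ?D = "{i. i<n \<and> (i\<in>X) \<noteq> f i}"
  have D: "?D \<in> Pow {..<n}" by auto
  have "tensor_apply n A \<psi> (set_encode X) =
     (\<Sum>Y\<in>Pow {..<n}. (\<Prod>i<n. A i (i \<in> X) (i \<in> Y)) * \<psi> (set_encode Y))"
    by (rule tensor_enc[OF X])
  also have "\<dots> = (\<Prod>i<n. A i (i \<in> X) (i \<in> ?D)) * \<psi> (set_encode ?D)"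
  proof (rule sum_remove_zero[OF _ D])
    fix Y assume Y: "Y \<in> Pow {..<n}" "Y \<noteq> ?D"
    then obtain i where i: "i < n" "(i \<in> Y) \<noteq> (i \<in> ?D)" by auto
    hence "A i (i \<in> X) (i \<in> Y) = 0" using mono by auto
    hence "(\<Prod>i<n. A i (i \<in> X) (i \<in> Y)) = 0" using i(1) by (meson finite_lessThan lessThan_iff prod_zero)
    thus "(\<Prod>i<n. A i (i \<in> X) (i \<in> Y)) * \<psi> (set_encode Y) = 0" by simp
  qed simp
  also have "(\<Prod>i<n. A i (i \<in> X) (i \<in> ?D)) = (\<Prod>i<n. A i (i\<in>X) ((i\<in>X) \<noteq> f i))"
    by (rule prod.cong) auto
  finally show ?thesis .
qed

lemma sum_Pow_split:
  assumes fB: "finite B" and fQ: "finite Q" and dj: "B \<inter> Q = {}"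
  shows "(\<Sum>X\<in>Pow (B \<union> Q). h X) = (\<Sum>R\<in>Pow B. \<Sum>S\<in>Pow Q. h (R \<union> S))"
proof -
  have bij: "bij_betw (\<lambda>(R,S). R \<union> S) (Pow B \<times> Pow Q) (Pow (B \<union> Q))"
    by (rule bij_betw_byWitness[where f' = "\<lambda>X. (X \<inter> B, X \<inter> Q)"]) (use dj in auto)
  have "(\<Sum>R\<in>Pow B. \<Sum>S\<in>Pow Q. h (R \<union> S)) = (\<Sum>p\<in>Pow B \<times> Pow Q. h (fst p \<union> snd p))"
    by (simp add: sum.cartesian_product split_def)
  also have "\<dots> = (\<Sum>X\<in>Pow (B \<union> Q). h X)"
    using sum.reindex_bij_betw[OF bij, of h] by (simp add: split_def)
  finally show ?thesis by simp
qed

lemma prod_id_eq: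
  assumes "R \<subseteq> B" "R' \<subseteq> B" "finite B"
  shows "(\<Prod>i\<in>B. (if (i\<in>R) = (i\<in>R') then 1 else 0::complex)) = (if R = R' then 1 else 0)"
proof (cases "R = R'")
  case True thus ?thesis by simp
next
  case False
  then obtain i where "i \<in> B" "(i\<in>R) \<noteq> (i\<in>R')" using assms by blast
  hence "\<exists>i\<in>B. (if (i\<in>R) = (i\<in>R') then 1 else 0::complex) = 0" by auto
  hence "(\<Prod>i\<in>B. (if (i\<in>R) = (i\<in>R') then 1 else 0::complex)) = 0"
    by (rule prod_zero[OF assms(3)])
  thus ?thesis using False by simp
qed

lemma inner_W: "qinner n (Wf n F) (Wf n G) = (\<Sum>m\<le>n. of_nat (n choose m) * (cnj (F m) * G m))"
proof -
  have "qinner n (Wf n F) (Wf n G) = (\<Sum>X\<in>Pow {..<n}. cnj (Wf n F (set_encode X)) * Wf n G (set_encode X))"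
    unfolding qinner_def by (rule sum_enc)
  also have "\<dots> = (\<Sum>X\<in>Pow {..<n}. cnj (F (card X)) * G (card X))"
    by (intro sum.cong refl) (simp add: Wf_enc)
  also have "\<dots> = (\<Sum>m\<le>card {..<n}. of_nat (card {..<n} choose m) * (cnj (F m) * G m))"
    by (rule sum_card) simp
  finally show ?thesis by simp
qed

lemma key:
  assumes Q: "Q \<subseteq> {..<n}" and Aid: "\<forall>i<n. i \<notin> Q \<longrightarrow> A i = (\<lambda>a b. if a = b then 1 else 0)"
  shows "qinner n (Wf n F) (tensor_apply n A (Wf n G)) =
    (\<Sum>S\<in>Pow Q. \<Sum>T\<in>Pow Q. (\<Prod>i\<in>Q. A i (i\<in>S) (i\<in>T)) *
       (\<Sum>R\<in>Pow ({..<n} - Q). cnj (F (card R + card S)) * G (card R + card T)))"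
proof -
  let ?B = "{..<n} - Q"
  have U: "{..<n} = ?B \<union> Q" using Q by auto
  have fB: "finite ?B" and fQ: "finite Q" and dj: "?B \<inter> Q = {}" using Q fin_sub by auto
  have TA: "tensor_apply n A (Wf n G) (set_encode (R \<union> S)) =
      (\<Sum>T\<in>Pow Q. (\<Prod>i\<in>Q. A i (i\<in>S) (i\<in>T)) * G (card R + card T))"
    if R: "R \<subseteq> ?B" and S: "S \<subseteq> Q" for R S
  proof -
    have "tensor_apply n A (Wf n G) (set_encode (R \<union> S)) =
      (\<Sum>Y\<in>Pow {..<n}. (\<Prod>i<n. A i (i \<in> R \<union> S) (i \<in> Y)) * Wf n G (set_encode Y))"
      by (rule tensor_enc) (use R S Q in auto)
    also have "\<dots> = (\<Sum>Y\<in>Pow (?B \<union> Q). (\<Prod>i<n. A i (i \<in> R \<union> S) (i \<in> Y)) * Wf n G (set_encode Y))"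
      using U by simp
    also have "\<dots> = (\<Sum>R'\<in>Pow ?B. \<Sum>T\<in>Pow Q. (\<Prod>i<n. A i (i \<in> R \<union> S) (i \<in> R' \<union> T)) * Wf n G (set_encode (R' \<union> T)))"
      by (rule sum_Pow_split[OF fB fQ dj])
    also have "\<dots> = (\<Sum>R'\<in>Pow ?B. \<Sum>T\<in>Pow Q. (if R = R' then 1 else 0) * ((\<Prod>i\<in>Q. A i (i\<in>S) (i\<in>T)) * G (card R' + card T)))"
    proof (intro sum.cong refl)
      fix R' T assume R': "R' \<in> Pow ?B" and T: "T \<in> Pow Q"
      have "(\<Prod>i<n. A i (i \<in> R \<union> S) (i \<in> R' \<union> T)) =
          (\<Prod>i\<in>?B \<union> Q. A i (i \<in> R \<union> S) (i \<in> R' \<union> T))" using U by simp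
      also have "\<dots> = (\<Prod>i\<in>?B. A i (i \<in> R \<union> S) (i \<in> R' \<union> T)) * (\<Prod>i\<in>Q. A i (i \<in> R \<union> S) (i \<in> R' \<union> T))"
        by (rule prod.union_disjoint[OF fB fQ dj])
      also have "(\<Prod>i\<in>?B. A i (i \<in> R \<union> S) (i \<in> R' \<union> T)) = (\<Prod>i\<in>?B. (if (i\<in>R) = (i\<in>R') then 1 else 0))"
        using Aid S T by (intro prod.cong refl) auto
      also have "\<dots> = (if R = R' then 1 else 0)" using R R' fB by (intro prod_id_eq) auto
      also have "(\<Prod>i\<in>Q. A i (i \<in> R \<union> S) (i \<in> R' \<union> T)) = (\<Prod>i\<in>Q. A i (i \<in> S) (i \<in> T))"
      proof (intro prod.cong refl)
        fix i assume "i \<in> Q"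
        hence "i \<notin> R" "i \<notin> R'" using R R' by auto
        thus "A i (i \<in> R \<union> S) (i \<in> R' \<union> T) = A i (i \<in> S) (i \<in> T)" by simp
      qed
      finally have P: "(\<Prod>i<n. A i (i \<in> R \<union> S) (i \<in> R' \<union> T)) =
         (if R = R' then 1 else 0) * (\<Prod>i\<in>Q. A i (i \<in> S) (i \<in> T))" .
      have W: "Wf n G (set_encode (R' \<union> T)) = G (card R' + card T)"
      proof -
        have "R' \<union> T \<subseteq> {..<n}" using R' T Q by auto
        hence "Wf n G (set_encode (R' \<union> T)) = G (card (R' \<union> T))" by (rule Wf_enc)
        also have "card (R' \<union> T) = card R' + card T"
          using R' T fB fQ dj by (intro card_Un_disjoint) (auto intro: finite_subset)
        finally show ?thesis .
      qed
      show "(\<Prod>i<n. A i (i \<in> R \<union> S) (i \<in> R' \<union> T)) * Wf n G (set_encode (R' \<union> T)) =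
         (if R = R' then 1 else 0) * ((\<Prod>i\<in>Q. A i (i\<in>S) (i\<in>T)) * G (card R' + card T))"
        by (simp only: P W mult.assoc)
    qed
    also have "\<dots> = (\<Sum>R'\<in>Pow ?B. if R = R' then (\<Sum>T\<in>Pow Q. (\<Prod>i\<in>Q. A i (i\<in>S) (i\<in>T)) * G (card R' + card T)) else 0)"
      by (intro sum.cong refl) auto
    also have "\<dots> = (\<Sum>T\<in>Pow Q. (\<Prod>i\<in>Q. A i (i\<in>S) (i\<in>T)) * G (card R + card T))"
      using R fB by (simp add: sum.delta')
    finally show ?thesis .
  qed
  have "qinner n (Wf n F) (tensor_apply n A (Wf n G)) =
     (\<Sum>X\<in>Pow {..<n}. cnj (Wf n F (set_encode X)) * tensor_apply n A (Wf n G) (set_encode X))"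
    unfolding qinner_def by (rule sum_enc)
  also have "\<dots> = (\<Sum>X\<in>Pow (?B \<union> Q). cnj (Wf n F (set_encode X)) * tensor_apply n A (Wf n G) (set_encode X))"
    using U by simp
  also have "\<dots> = (\<Sum>R\<in>Pow ?B. \<Sum>S\<in>Pow Q. cnj (Wf n F (set_encode (R \<union> S))) * tensor_apply n A (Wf n G) (set_encode (R \<union> S)))"
    by (rule sum_Pow_split[OF fB fQ dj])
  also have "\<dots> = (\<Sum>R\<in>Pow ?B. \<Sum>S\<in>Pow Q. \<Sum>T\<in>Pow Q. (\<Prod>i\<in>Q. A i (i\<in>S) (i\<in>T)) * (cnj (F (card R + card S)) * G (card R + card T)))"
  proof (intro sum.cong refl)
    fix R S assume R: "R \<in> Pow ?B" and S: "S \<in> Pow Q"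
    have "Wf n F (set_encode (R \<union> S)) = F (card (R \<union> S))" using R S Q by (intro Wf_enc) auto
    also have "card (R \<union> S) = card R + card S"
      using R S fB fQ dj by (intro card_Un_disjoint) (auto intro: finite_subset)
    finally have "Wf n F (set_encode (R \<union> S)) = F (card R + card S)" .
    thus "cnj (Wf n F (set_encode (R \<union> S))) * tensor_apply n A (Wf n G) (set_encode (R \<union> S)) =
      (\<Sum>T\<in>Pow Q. (\<Prod>i\<in>Q. A i (i\<in>S) (i\<in>T)) * (cnj (F (card R + card S)) * G (card R + card T)))"
      using TA[of R S] R S by (simp add: sum_distrib_left mult_ac)
  qed
  also have "\<dots> = (\<Sum>S\<in>Pow Q. \<Sum>R\<in>Pow ?B. \<Sum>T\<in>Pow Q. (\<Prod>i\<in>Q. A i (i\<in>S) (i\<in>T)) * (cnj (F (card R + card S)) * G (card R + card T)))"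
    by (rule sum.swap)
  also have "\<dots> = (\<Sum>S\<in>Pow Q. \<Sum>T\<in>Pow Q. \<Sum>R\<in>Pow ?B. (\<Prod>i\<in>Q. A i (i\<in>S) (i\<in>T)) * (cnj (F (card R + card S)) * G (card R + card T)))"
    by (intro sum.cong refl sum.swap)
  also have "\<dots> = (\<Sum>S\<in>Pow Q. \<Sum>T\<in>Pow Q. (\<Prod>i\<in>Q. A i (i\<in>S) (i\<in>T)) *
       (\<Sum>R\<in>Pow ?B. cnj (F (card R + card S)) * G (card R + card T)))"
    by (simp add: sum_distrib_left)
  finally show ?thesis .
qed

definition kr :: "nat \<Rightarrow> (nat \<Rightarrow> real) \<Rightarrow> (nat \<Rightarrow> real) \<Rightarrow> nat \<Rightarrow> nat \<Rightarrow> real" where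
  "kr N f g s t = (\<Sum>m\<le>N. real (N choose m) * (f (m+s) * g (m+t)))"

lemma ker_bilin:
  "(\<Sum>m\<le>N. of_nat (N choose m) * (cnj (c0 * complex_of_real (f0 (m+s)) + c1 * complex_of_real (f1 (m+s))) *
       (d0 * complex_of_real (f0 (m+t)) + d1 * complex_of_real (f1 (m+t))))) =
   cnj c0 * d0 * complex_of_real (kr N f0 f0 s t) + cnj c0 * d1 * complex_of_real (kr N f0 f1 s t) +
   cnj c1 * d0 * complex_of_real (kr N f1 f0 s t) + cnj c1 * d1 * complex_of_real (kr N f1 f1 s t)"
  unfolding kr_def of_real_sum sum_distrib_left sum.distrib[symmetric]
  by (intro sum.cong refl) (simp add: algebra_simps)

lemma sum_ind:
  "(\<Sum>m\<le>N. real (N choose m) * ((if m+s = u then x else 0) * (if m+t = v then y else 0))) =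
   (if s \<le> u \<and> u - s \<le> N \<and> u + t = v + s then real (N choose (u-s)) * (x*y) else 0)"
proof (cases "s \<le> u \<and> u - s \<le> N \<and> u + t = v + s")
  case True
  have "(\<Sum>m\<le>N. real (N choose m) * ((if m+s = u then x else 0) * (if m+t = v then y else 0))) =
      real (N choose (u-s)) * ((if (u-s)+s = u then x else 0) * (if (u-s)+t = v then y else 0))"
    by (rule sum_remove_zero) (use True in auto)
  thus ?thesis using True by simp
next
  case False
  have "(\<Sum>m\<le>N. real (N choose m) * ((if m+s = u then x else 0) * (if m+t = v then y else 0))) = 0"
    by (rule sum.neutral) (use False in auto)
  thus ?thesis unfolding if_not_P[OF False] .
qed

lemma kr_expand:
  "kr N (\<lambda>w. (if w = u1 then x1 else 0) + (if w = u2 then x2 else 0))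
        (\<lambda>w. (if w = v1 then y1 else 0) + (if w = v2 then y2 else 0)) s t =
   (if s \<le> u1 \<and> u1 - s \<le> N \<and> u1 + t = v1 + s then real (N choose (u1-s)) * (x1*y1) else 0) +
   (if s \<le> u1 \<and> u1 - s \<le> N \<and> u1 + t = v2 + s then real (N choose (u1-s)) * (x1*y2) else 0) +
   (if s \<le> u2 \<and> u2 - s \<le> N \<and> u2 + t = v1 + s then real (N choose (u2-s)) * (x2*y1) else 0) +
   (if s \<le> u2 \<and> u2 - s \<le> N \<and> u2 + t = v2 + s then real (N choose (u2-s)) * (x2*y2) else 0)"
proof -
  have "kr N (\<lambda>w. (if w = u1 then x1 else 0) + (if w = u2 then x2 else 0))
        (\<lambda>w. (if w = v1 then y1 else 0) + (if w = v2 then y2 else 0)) s t =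
    (\<Sum>m\<le>N. real (N choose m) * ((if m+s = u1 then x1 else 0) * (if m+t = v1 then y1 else 0))) +
    (\<Sum>m\<le>N. real (N choose m) * ((if m+s = u1 then x1 else 0) * (if m+t = v2 then y2 else 0))) +
    (\<Sum>m\<le>N. real (N choose m) * ((if m+s = u2 then x2 else 0) * (if m+t = v1 then y1 else 0))) +
    (\<Sum>m\<le>N. real (N choose m) * ((if m+s = u2 then x2 else 0) * (if m+t = v2 then y2 else 0)))"
    unfolding kr_def sum.distrib[symmetric] by (intro sum.cong refl) (simp add: algebra_simps)
  thus ?thesis by (simp only: sum_ind)
qed

lemma choose2: "real (N choose 2) = real N * (real N - 1) / 2"
proof (induction N)
  case 0 thus ?case by simp
next
  case (Suc N)
  have "(Suc N choose 2) = (N choose 1) + (N choose 2)"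
    by (simp add: numeral_2_eq_2)
  thus ?case using Suc by (simp add: field_simps)
qed

lemma choose3: "real (N choose 3) = real N * (real N - 1) * (real N - 2) / 6"
proof (induction N)
  case 0 thus ?case by simp
next
  case (Suc N)
  have "(Suc N choose 3) = (N choose 2) + (N choose 3)"
    by (simp add: numeral_3_eq_3 numeral_2_eq_2)
  moreover note choose2[of N]
  ultimately show ?case using Suc by (simp add: field_simps)
qed

definition f0g :: "real \<Rightarrow> real \<Rightarrow> nat \<Rightarrow> nat \<Rightarrow> real" where
  "f0g a b M w = (if w = 0 then a else 0) + (if w = M then b else 0)"
definition f1g :: "real \<Rightarrow> real \<Rightarrow> nat \<Rightarrow> nat \<Rightarrow> real" where
  "f1g a b M w = (if w = 3 then b else 0) + (if w = M+3 then a else 0)"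

lemma kr01:
  assumes "M \<ge> 8" "s \<le> 2" "t \<le> 2"
  shows "kr N (f0g a b M) (f1g a b M) s t = 0"
  unfolding f0g_def f1g_def kr_expand using assms by auto

lemma kr10:
  assumes "M \<ge> 8" "s \<le> 2" "t \<le> 2"
  shows "kr N (f1g a b M) (f0g a b M) s t = 0"
  unfolding f0g_def f1g_def kr_expand using assms by auto

lemma kr00_off:
  assumes "M \<ge> 8" "s \<le> 2" "t \<le> 2" "s \<noteq> t"
  shows "kr N (f0g a b M) (f0g a b M) s t = 0" "kr N (f1g a b M) (f1g a b M) s t = 0"
  unfolding f0g_def f1g_def kr_expand using assms by auto

lemma kr00_diag:
  assumes "M \<ge> 8" "s \<le> 2" "M + 1 \<le> N"
  shows "kr N (f0g a b M) (f0g a b M) s s = (if s = 0 then a*a else 0) + real (N choose (M - s)) * (b*b)"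
  unfolding f0g_def kr_expand using assms by auto

lemma kr11_diag:
  assumes "M \<ge> 8" "s \<le> 2" "M + 1 \<le> N"
  shows "kr N (f1g a b M) (f1g a b M) s s = real (N choose (3 - s)) * (b*b) +
     (if M + 3 - s \<le> N then real (N choose (M + 3 - s)) * (a*a) else 0)"
  unfolding f1g_def kr_expand using assms by auto

lemma sym_choose: "k \<le> n \<Longrightarrow> n - k = j \<Longrightarrow> (n choose k) = (n choose j)"
  using binomial_symmetric by blast

lemma kr_diag_eq:
  assumes M: "M \<ge> 8" and q: "q \<le> 2" and s: "s \<le> q"
    and a2: "a*a = (real M - 3)/(2 * real M)" and b2: "b*b = 3/(real M * (real M + 1) * (real M + 2))"
  shows "kr (M+3-q) (f0g a b M) (f0g a b M) s s = kr (M+3-q) (f1g a b M) (f1g a b M) s s"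
proof -
  have L: "kr (M+3-q) (f0g a b M) (f0g a b M) s s = (if s = 0 then a*a else 0) + real ((M+3-q) choose (M - s)) * (b*b)"
    using M q s by (intro kr00_diag) auto
  have R: "kr (M+3-q) (f1g a b M) (f1g a b M) s s = real ((M+3-q) choose (3 - s)) * (b*b) +
     (if M + 3 - s \<le> M+3-q then real ((M+3-q) choose (M + 3 - s)) * (a*a) else 0)"
    using M q s by (intro kr11_diag) auto
  have m0: "real M \<noteq> 0" using M by simp
  have m1: "real M + 1 \<noteq> 0" "1 + real M \<noteq> 0" using M by linarith+
  have m2: "real M + 2 \<noteq> 0" "2 + real M \<noteq> 0" using M by linarith+
  define x where "x = real M"
  have x8: "x \<ge> 8" using M x_def by simp
  have nz: "x \<noteq> 0" "x + 2 \<noteq> 0" using x8 by linarith+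
  have cA: "(a*a)*(2*x) = x - 3" using a2 nz by (simp add: x_def field_simps)
  define P where "P = x*(x+1)*(x+2)"
  have P0: "P \<noteq> 0" unfolding P_def using x8 by (simp add: add_nonneg_eq_0_iff)
  have "b*b = 3/P" using b2 unfolding P_def x_def by simp
  hence "(b*b)*P = 3" using P0 by (simp add: field_simps)
  hence cB: "(b*b)*(x*(x+1)*(x+2)) = 3" unfolding P_def .
  have r1: "real (M+1) = x + 1" "real (M+2) = x + 2" using x_def by simp_all
  have h10: "a*a + real (M+2 choose 2)*(b*b) = real (M+2 choose 3)*(b*b)"
    unfolding choose2 choose3 r1 using cA cB nz by algebra
  have h20: "a*a + real (M+1 choose 1)*(b*b) = real (M+1 choose 3)*(b*b)"
  proof -
    have "real (M+1 choose 1) = x + 1" using x_def by simp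
    thus ?thesis unfolding choose3 r1 using cA cB nz by algebra
  qed
  consider "q = 0" "s = 0" | "q = 1" "s = 0" | "q = 1" "s = 1" | "q = 2" "s = 0" | "q = 2" "s = 1" | "q = 2" "s = 2"
    using q s by linarith
  thus ?thesis
  proof cases
    case 1
    have "(M + 3 choose M) = (M + 3 choose 3)" by (rule sym_choose) auto
    thus ?thesis unfolding L R using 1 by simp
  next
    case 2
    have "(M + 2 choose M) = (M + 2 choose 2)" by (rule sym_choose) auto
    moreover have "M + 3 - 1 = M + 2" by simp
    ultimately show ?thesis unfolding L R using 2 h10 by simp
  next
    case 3
    have "(M + 2 choose (M - 1)) = (M + 2 choose 3)" by (rule sym_choose) (use M in auto)
    moreover have "M + 3 - 1 = M + 2" by simp
    ultimately show ?thesis unfolding L R using 3 h10 by simp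
  next
    case 4
    have "(M + 1 choose M) = (M + 1 choose 1)" by (rule sym_choose) auto
    moreover have "M + 3 - 2 = M + 1" by simp
    ultimately show ?thesis unfolding L R using 4 h20 by simp
  next
    case 5
    have "(M + 1 choose (M - 1)) = (M + 1 choose 2)" by (rule sym_choose) (use M in auto)
    moreover have "M + 3 - 2 = M + 1" by simp
    ultimately show ?thesis unfolding L R using 5 by simp
  next
    case 6
    have "(M + 1 choose (M - 2)) = (M + 1 choose 3)" by (rule sym_choose) (use M in auto)
    moreover have "M + 3 - 2 = M + 1" by simp
    ultimately show ?thesis unfolding L R using 6 h20 by simp
  qed
qed

definition al :: "nat \<Rightarrow> real" where
  "al r = sqrt ((2::real)^r - 3) / sqrt (2^(r+1))"
definition be :: "nat \<Rightarrow> real" where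
  "be r = sqrt ((2::real)^r + 3) / sqrt (2^(r+1)) * (1 / sqrt (real ((2^r+3) choose 3)))"

abbreviation F0 :: "nat \<Rightarrow> nat \<Rightarrow> complex" where
  "F0 r w \<equiv> complex_of_real (f0g (al r) (be r) (2^r) w)"
abbreviation F1 :: "nat \<Rightarrow> nat \<Rightarrow> complex" where
  "F1 r w \<equiv> complex_of_real (f1g (al r) (be r) (2^r) w)"

lemma cw0_W: "cw0 r = Wf (2^r+3) (F0 r)"
proof -
  have "((2::nat)^r + 3 choose 2^r) = (2^r + 3 choose 3)" by (rule sym_choose) auto
  thus ?thesis
    unfolding cw0_def Let_def dicke_def Wf_def f0g_def al_def be_def
    by (auto simp: fun_eq_iff)
qed

lemma cw1_W: "cw1 r = Wf (2^r+3) (F1 r)"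
  unfolding cw1_def Let_def dicke_def Wf_def f1g_def al_def be_def
  by (auto simp: fun_eq_iff)

lemma al2: "r \<ge> 3 \<Longrightarrow> al r * al r = (real (2^r) - 3) / (2 * real (2^r))"
proof -
  assume r: "r \<ge> 3"
  have "(2::real)^r \<ge> 2^3" using r by (intro power_increasing) auto
  hence "(2::real)^r - 3 \<ge> 0" by simp
  have "al r * al r = (sqrt ((2::real)^r - 3) * sqrt ((2::real)^r - 3)) / (sqrt (2^(r+1)) * sqrt (2^(r+1)))"
    unfolding al_def by simp
  also have "\<dots> = ((2::real)^r - 3) / 2^(r+1)"
    using \<open>(2::real)^r - 3 \<ge> 0\<close> by (simp only: real_sqrt_mult_self abs_of_nonneg) simp
  finally show ?thesis by simp
qed

lemma M8: "r \<ge> 3 \<Longrightarrow> (8::nat) \<le> 2^r"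
  using power_increasing[of 3 r "2::nat"] by simp

lemma sqsq: "u \<ge> 0 \<Longrightarrow> sqrt u * sqrt u = (u::real)"
  by simp

lemma be2: "r \<ge> 3 \<Longrightarrow> be r * be r = 3 / (real (2^r) * (real (2^r) + 1) * (real (2^r) + 2))"
proof -
  assume r: "r \<ge> 3"
  define x where "x = real (2^r)"
  have x8: "x \<ge> 8" unfolding x_def using r
    using M8[OF r] by linarith
  define C where "C = real ((2^r+3) choose 3)"
  have C: "C = (x+3)*(x+2)*(x+1)/6" unfolding C_def choose3 x_def by (simp add: algebra_simps)
  have Cp: "C > 0" unfolding C using x8 by simp
  have e: "be r = sqrt (x+3) / sqrt (2*x) * (1 / sqrt C)" unfolding be_def C_def x_def by simp
  have "(be r)^2 = (x+3)/(2*x) * (1/C)"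
    unfolding e using x8 Cp by (simp add: power_mult_distrib power_divide real_sqrt_pow2)
  hence "be r * be r = (x+3)/(2*x) * (1/C)" by (simp add: power2_eq_square)
  also have "\<dots> = 3 / (x * (x + 1) * (x + 2))"
  proof -
    have "x \<noteq> 0" "x + 1 \<noteq> 0" "x + 2 \<noteq> 0" "x + 3 \<noteq> 0" "1 + x \<noteq> 0" using x8 by auto
    thus ?thesis unfolding C by (simp add: divide_simps)
  qed
  finally show ?thesis unfolding x_def .
qed

lemma kr_norm:
  assumes M: "M \<ge> 8"
    and a2: "a*a = (real M - 3)/(2 * real M)" and b2: "b*b = 3/(real M * (real M + 1) * (real M + 2))"
  shows "kr (M+3) (f0g a b M) (f0g a b M) 0 0 = 1"
proof -
  have L: "kr (M+3) (f0g a b M) (f0g a b M) 0 0 = a*a + real ((M+3) choose M) * (b*b)"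
    using kr00_diag[of M 0 "M+3" a b] M by simp
  have "(M + 3 choose M) = (M + 3 choose 3)" by (rule sym_choose) auto
  hence "real ((M+3) choose M) = (real M + 3) * (real M + 2) * (real M + 1) / 6"
    by (simp add: choose3 algebra_simps)
  moreover have "real M \<noteq> 0" "real M + 1 \<noteq> 0" "real M + 2 \<noteq> 0" "real M + 3 \<noteq> 0" "1 + real M \<noteq> 0"
     "2 + real M \<noteq> 0" "3 + real M \<noteq> 0" using M by auto
  ultimately show ?thesis unfolding L a2 b2 by (simp add: divide_simps) algebra
qed

definition Gc :: "nat \<Rightarrow> complex \<Rightarrow> complex \<Rightarrow> nat \<Rightarrow> complex" where
  "Gc r c0 c1 = (\<lambda>w. c0 * F0 r w + c1 * F1 r w)"

lemma kr_all:
  assumes r: "r \<ge> 3" and q: "q \<le> 2" "s \<le> q" "t \<le> q"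
  shows "kr (2^r+3-q) (f0g (al r) (be r) (2^r)) (f1g (al r) (be r) (2^r)) s t = 0"
    "kr (2^r+3-q) (f1g (al r) (be r) (2^r)) (f0g (al r) (be r) (2^r)) s t = 0"
    "kr (2^r+3-q) (f1g (al r) (be r) (2^r)) (f1g (al r) (be r) (2^r)) s t =
     kr (2^r+3-q) (f0g (al r) (be r) (2^r)) (f0g (al r) (be r) (2^r)) s t"
proof -
  have M: "2^r \<ge> (8::nat)" using M8[OF r] .
  show "kr (2^r+3-q) (f0g (al r) (be r) (2^r)) (f1g (al r) (be r) (2^r)) s t = 0"
    using kr01 M q by simp
  show "kr (2^r+3-q) (f1g (al r) (be r) (2^r)) (f0g (al r) (be r) (2^r)) s t = 0"
    using kr10 M q by simp
  show "kr (2^r+3-q) (f1g (al r) (be r) (2^r)) (f1g (al r) (be r) (2^r)) s t =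
     kr (2^r+3-q) (f0g (al r) (be r) (2^r)) (f0g (al r) (be r) (2^r)) s t"
  proof (cases "s = t")
    case True
    thus ?thesis using kr_diag_eq[OF M q(1) q(2) al2[OF r] be2[OF r]] by simp
  next
    case False
    thus ?thesis using kr00_off[OF M _ _ False] q by simp
  qed
qed

lemma inner_kernel:
  assumes r: "r \<ge> 3" and q: "q \<le> 2" "s \<le> q" "t \<le> q"
  shows "(\<Sum>m\<le>2^r+3-q. of_nat ((2^r+3-q) choose m) * (cnj (Gc r c0 c1 (m+s)) * Gc r d0 d1 (m+t))) =
     (cnj c0 * d0 + cnj c1 * d1) * complex_of_real (kr (2^r+3-q) (f0g (al r) (be r) (2^r)) (f0g (al r) (be r) (2^r)) s t)"
  unfolding Gc_def ker_bilin kr_all[OF assms] by (simp add: algebra_simps)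

lemma inner_Gc:
  assumes r: "r \<ge> 3"
  shows "qinner (2^r+3) (Wf (2^r+3) (Gc r c0 c1)) (Wf (2^r+3) (Gc r d0 d1)) = cnj c0 * d0 + cnj c1 * d1"
proof -
  have "qinner (2^r+3) (Wf (2^r+3) (Gc r c0 c1)) (Wf (2^r+3) (Gc r d0 d1)) =
    (\<Sum>m\<le>2^r+3-0. of_nat ((2^r+3-0) choose m) * (cnj (Gc r c0 c1 (m+0)) * Gc r d0 d1 (m+0)))"
    by (simp add: inner_W)
  also have "\<dots> = (cnj c0 * d0 + cnj c1 * d1) * complex_of_real (kr (2^r+3-0) (f0g (al r) (be r) (2^r)) (f0g (al r) (be r) (2^r)) 0 0)"
    by (rule inner_kernel[OF r]) auto
  also have "kr (2^r+3-0) (f0g (al r) (be r) (2^r)) (f0g (al r) (be r) (2^r)) 0 0 = 1"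
    using kr_norm[OF M8[OF r] al2[OF r] be2[OF r]] by simp
  finally show ?thesis by simp
qed

definition cE :: "nat \<Rightarrow> (nat \<Rightarrow> nat) \<Rightarrow> complex" where
  "cE r p = (let n = 2^r+3; Q = {i. i < n \<and> p i \<noteq> 0} in
     (\<Sum>S\<in>Pow Q. \<Sum>T\<in>Pow Q. (\<Prod>i\<in>Q. pauli1 (p i) (i\<in>S) (i\<in>T)) *
        complex_of_real (kr (n - card Q) (f0g (al r) (be r) (2^r)) (f0g (al r) (be r) (2^r)) (card S) (card T))))"

lemma KL:
  assumes r: "r \<ge> 3" and w: "pauli_weight (2^r+3) p < 3"
  shows "qinner (2^r+3) (Wf (2^r+3) (Gc r c0 c1)) (pauli_op (2^r+3) p (Wf (2^r+3) (Gc r d0 d1))) =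
     (cnj c0 * d0 + cnj c1 * d1) * cE r p"
proof -
  define n :: nat where "n = 2^r+3"
  define Q where "Q = {i. i < n \<and> p i \<noteq> 0}"
  have Qs: "Q \<subseteq> {..<n}" unfolding Q_def by auto
  have fQ: "finite Q" using Qs fin_sub by auto
  have q2: "card Q \<le> 2" using w unfolding pauli_weight_def Q_def n_def by simp
  have cB: "card ({..<n} - Q) = n - card Q" using Qs by (simp add: card_Diff_subset fQ)
  have Aid: "\<forall>i<n. i \<notin> Q \<longrightarrow> pauli1 (p i) = (\<lambda>a b. if a = b then 1 else 0)"
    unfolding Q_def pauli1_def by (auto simp: fun_eq_iff)
  have "qinner n (Wf n (Gc r c0 c1)) (pauli_op n p (Wf n (Gc r d0 d1))) =
    (\<Sum>S\<in>Pow Q. \<Sum>T\<in>Pow Q. (\<Prod>i\<in>Q. pauli1 (p i) (i\<in>S) (i\<in>T)) *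
       (\<Sum>R\<in>Pow ({..<n} - Q). cnj (Gc r c0 c1 (card R + card S)) * Gc r d0 d1 (card R + card T)))"
    unfolding pauli_op_def by (rule key[OF Qs Aid])
  also have "\<dots> = (\<Sum>S\<in>Pow Q. \<Sum>T\<in>Pow Q. (\<Prod>i\<in>Q. pauli1 (p i) (i\<in>S) (i\<in>T)) *
       ((cnj c0 * d0 + cnj c1 * d1) * complex_of_real (kr (n - card Q) (f0g (al r) (be r) (2^r)) (f0g (al r) (be r) (2^r)) (card S) (card T))))"
  proof (intro sum.cong refl arg_cong2[where f = "(*)"])
    fix S T assume S: "S \<in> Pow Q" and T: "T \<in> Pow Q"
    have sS: "card S \<le> card Q" "card T \<le> card Q" using S T fQ by (auto intro: card_mono)
    have "(\<Sum>R\<in>Pow ({..<n} - Q). cnj (Gc r c0 c1 (card R + card S)) * Gc r d0 d1 (card R + card T)) =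
      (\<Sum>m\<le>card ({..<n} - Q). of_nat (card ({..<n} - Q) choose m) * (cnj (Gc r c0 c1 (m + card S)) * Gc r d0 d1 (m + card T)))"
      by (rule sum_card) simp
    also have "\<dots> = (\<Sum>m\<le>2^r+3 - card Q. of_nat ((2^r+3 - card Q) choose m) * (cnj (Gc r c0 c1 (m + card S)) * Gc r d0 d1 (m + card T)))"
      unfolding cB unfolding n_def ..
    also have "\<dots> = (cnj c0 * d0 + cnj c1 * d1) * complex_of_real (kr (2^r+3 - card Q) (f0g (al r) (be r) (2^r)) (f0g (al r) (be r) (2^r)) (card S) (card T))"
      by (rule inner_kernel[OF r q2 sS])
    finally show "(\<Sum>R\<in>Pow ({..<n} - Q). cnj (Gc r c0 c1 (card R + card S)) * Gc r d0 d1 (card R + card T)) =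
      (cnj c0 * d0 + cnj c1 * d1) * complex_of_real (kr (n - card Q) (f0g (al r) (be r) (2^r)) (f0g (al r) (be r) (2^r)) (card S) (card T))"
      unfolding n_def .
  qed
  also have "\<dots> = (cnj c0 * d0 + cnj c1 * d1) * cE r p"
    unfolding cE_def Let_def n_def[symmetric] Q_def[symmetric] sum_distrib_left
    by (intro sum.cong refl) (simp add: mult_ac)
  finally show ?thesis unfolding n_def .
qed

lemma Wf_supported: "supported n (Wf n F)"
  unfolding supported_def Wf_def by simp

lemma cw0_G: "cw0 r = Wf (2^r+3) (Gc r 1 0)"
  unfolding cw0_W Gc_def by simp

lemma cw1_G: "cw1 r = Wf (2^r+3) (Gc r 0 1)"
  unfolding cw1_W Gc_def by simp

lemma span_elem: "(\<lambda>x. \<Sum>j<length [cw0 r, cw1 r]. a j * ([cw0 r, cw1 r] ! j) x) = Wf (2^r+3) (Gc r (a 0) (a 1))"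
  by (auto simp: fun_eq_iff numeral_2_eq_2 cw0_W cw1_W Wf_def Gc_def)

lemma code_set: "cspan_list [cw0 r, cw1 r] = {Wf (2^r+3) (Gc r c0 c1) | c0 c1. True}"
proof (rule set_eqI)
  fix \<phi>
  show "\<phi> \<in> cspan_list [cw0 r, cw1 r] \<longleftrightarrow> \<phi> \<in> {Wf (2^r+3) (Gc r c0 c1) | c0 c1. True}"
  proof
    assume "\<phi> \<in> cspan_list [cw0 r, cw1 r]"
    then obtain a where "\<phi> = (\<lambda>x. \<Sum>j<length [cw0 r, cw1 r]. a j * ([cw0 r, cw1 r] ! j) x)"
      unfolding cspan_list_def by blast
    thus "\<phi> \<in> {Wf (2^r+3) (Gc r c0 c1) | c0 c1. True}" unfolding span_elem by blast
  next
    assume "\<phi> \<in> {Wf (2^r+3) (Gc r c0 c1) | c0 c1. True}"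
    then obtain c0 c1 where e: "\<phi> = Wf (2^r+3) (Gc r c0 c1)" by blast
    define a where "a = (\<lambda>j::nat. if j = 0 then c0 else c1)"
    have "\<phi> = (\<lambda>x. \<Sum>j<length [cw0 r, cw1 r]. a j * ([cw0 r, cw1 r] ! j) x)"
      unfolding span_elem e a_def by simp
    thus "\<phi> \<in> cspan_list [cw0 r, cw1 r]" unfolding cspan_list_def by blast
  qed
qed

lemma ortho: "r \<ge> 3 \<Longrightarrow> orthonormal_list (2^r+3) [cw0 r, cw1 r]"
proof -
  assume r: "r \<ge> 3"
  have "\<forall>j<2. \<forall>k<2. qinner (2^r+3) ([cw0 r, cw1 r] ! j) ([cw0 r, cw1 r] ! k) = (if j = k then 1 else 0)"
    by (auto simp: less_2_cases_iff cw0_G cw1_G inner_Gc[OF r])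
  moreover have "\<forall>j<2. supported (2^r+3) ([cw0 r, cw1 r] ! j)"
    by (auto simp: less_2_cases_iff cw0_G cw1_G Wf_supported)
  ultimately show ?thesis unfolding orthonormal_list_def by simp
qed

theorem part_qcode: "r \<ge> 3 \<Longrightarrow> qcode (2^r + 3) 2 3 (cspan_list [cw0 r, cw1 r])"
proof -
  assume r: "r \<ge> 3"
  have A: "\<exists>B. length B = 2 \<and> orthonormal_list (2^r+3) B \<and> cspan_list [cw0 r, cw1 r] = cspan_list B"
    using ortho[OF r] by (intro exI[of _ "[cw0 r, cw1 r]"]) simp
  have B: "\<exists>c. \<forall>\<phi>\<in>cspan_list [cw0 r, cw1 r]. \<forall>\<psi>\<in>cspan_list [cw0 r, cw1 r].
      qinner (2^r+3) \<phi> (pauli_op (2^r+3) p \<psi>) = c * qinner (2^r+3) \<phi> \<psi>"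
    if "pauli_string (2^r+3) p \<and> pauli_weight (2^r+3) p < 3" for p
  proof (intro exI[of _ "cE r p"] ballI)
    fix \<phi> \<psi> assume "\<phi> \<in> cspan_list [cw0 r, cw1 r]" "\<psi> \<in> cspan_list [cw0 r, cw1 r]"
    then obtain c0 c1 d0 d1 where e: "\<phi> = Wf (2^r+3) (Gc r c0 c1)" "\<psi> = Wf (2^r+3) (Gc r d0 d1)"
      unfolding code_set by blast
    show "qinner (2^r+3) \<phi> (pauli_op (2^r+3) p \<psi>) = cE r p * qinner (2^r+3) \<phi> \<psi>"
      unfolding e KL[OF r conjunct2[OF that]] inner_Gc[OF r] by simp
  qed
  show ?thesis unfolding qcode_def using A B by blast
qed

lemma perm_Wf:
  assumes bij: "bij_betw \<pi> {..<n} {..<n}"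
  shows "perm_state n \<pi> (Wf n G) = Wf n G"
proof (rule ext)
  fix x
  show "perm_state n \<pi> (Wf n G) x = Wf n G x"
  proof (cases "x < 2^n")
    case False thus ?thesis unfolding perm_state_def Wf_def by simp
  next
    case True
    let ?D = "set_decode x"
    let ?Y = "{i. i < n \<and> \<pi> i \<in> ?D}"
    have D: "?D \<subseteq> {..<n}" using dec_sub[OF True] .
    have Y: "?Y \<subseteq> {..<n}" by auto
    have s: "(\<Sum>i<n. if bit x (\<pi> i) then 2^i else 0) = set_encode ?Y"
    proof -
      have "(\<Sum>i<n. if bit x (\<pi> i) then 2^i else (0::nat)) = (\<Sum>i\<in>{i\<in>{..<n}. \<pi> i \<in> ?D}. 2^i)"
        unfolding dec_bit by (rule sum.inter_filter[symmetric]) simp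
      also have "{i\<in>{..<n}. \<pi> i \<in> ?D} = ?Y" by auto
      finally show ?thesis by (simp add: set_encode_def)
    qed
    have img: "\<pi> ` ?Y = ?D"
    proof
      show "\<pi> ` ?Y \<subseteq> ?D" by auto
      show "?D \<subseteq> \<pi> ` ?Y"
      proof
        fix j assume j: "j \<in> ?D"
        hence "j \<in> {..<n}" using D by auto
        hence "j \<in> \<pi> ` {..<n}" using bij unfolding bij_betw_def by simp
        then obtain i where "i \<in> {..<n}" "\<pi> i = j" by blast
        thus "j \<in> \<pi> ` ?Y" using j by auto
      qed
    qed
    have inj: "inj_on \<pi> ?Y" by (rule inj_on_subset[OF bij_betw_imp_inj_on[OF bij] Y])
    have c: "card ?Y = card ?D" using card_image[OF inj] img by simp
    have "perm_state n \<pi> (Wf n G) x = Wf n G (set_encode ?Y)"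
      unfolding perm_state_def s using True by simp
    also have "\<dots> = G (card ?Y)" by (rule Wf_enc[OF Y])
    also have "\<dots> = Wf n G x" unfolding c Wf_def using True hweight_dec[OF True] by simp
    finally show ?thesis .
  qed
qed

theorem part_perm: "perm_invariant (2^r + 3) (cspan_list [cw0 r, cw1 r])"
  unfolding perm_invariant_def code_set using perm_Wf by blast

definition S0 :: "nat \<Rightarrow> mat2 set" where
  "S0 M = {g. (g False True = 0 \<and> g True False = 0 \<and> g False False ^ (2*M) = 1 \<and> g True True ^ (2*M) = 1
               \<and> g False False ^ M = g True True ^ M) \<or>
              (g False False = 0 \<and> g True True = 0 \<and> g False True ^ (2*M) = 1 \<and> g True False ^ (2*M) = 1
               \<and> g False True ^ M = g True False ^ M)}"

lemma S0_mult: "g \<in> S0 M \<Longrightarrow> h \<in> S0 M \<Longrightarrow> mmul g h \<in> S0 M"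
  unfolding S0_def mmul_def by (auto simp: power_mult_distrib)

lemma i4: "\<i> ^ (4 * k) = 1" "(- \<i>) ^ (4 * k) = 1"
  by (simp_all add: power_mult)

lemma gens_S0:
  assumes r: "r \<ge> 3"
  shows "sfX \<in> S0 (2^r)" "sfZ \<in> S0 (2^r)" "sfPh (2 * pi / 2^r) \<in> S0 (2^r)"
proof -
  define k :: nat where "k = 2^(r-2)"
  have k: "(2::nat)^r = 4 * k"
  proof -
    have "r = (r - 2) + 2" using r by simp
    hence "(2::nat)^r = 2^(r-2) * 2^2" by (metis power_add)
    thus ?thesis unfolding k_def by simp
  qed
  have e2: "2 * (2::nat)^r = 4 * (2 * k)" using k by simp
  show "sfX \<in> S0 (2^r)" unfolding S0_def sfX_def using i4[of "2*k"] i4[of k] k e2 by simp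
  show "sfZ \<in> S0 (2^r)" unfolding S0_def sfZ_def using i4[of "2*k"] i4[of k] k e2 by simp
  have c1: "cis (- (2 * pi / 2 ^ r) / 2) ^ (2 * 2^r) = 1" "cis ((2 * pi / 2 ^ r) / 2) ^ (2 * 2^r) = 1"
    by (simp_all add: DeMoivre complex_eq_iff)
  have c2: "cis (- (2 * pi / 2 ^ r) / 2) ^ (2^r) = -1" "cis ((2 * pi / 2 ^ r) / 2) ^ (2^r) = -1"
    by (simp_all add: DeMoivre complex_eq_iff)
  show "sfPh (2 * pi / 2^r) \<in> S0 (2^r)" unfolding S0_def sfPh_def using c1 c2 by simp
qed

lemma quat_S0: assumes r: "r \<ge> 3" shows "quatgroup r \<subseteq> S0 (2^r)"
proof
  fix g assume "g \<in> quatgroup r"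
  hence "g \<in> mgen {sfX, sfZ, sfPh (2 * pi / 2^r)}" unfolding quatgroup_def .
  thus "g \<in> S0 (2^r)"
  proof (induction rule: mgen.induct)
    case (base g) thus ?case using gens_S0[OF r] by auto
  next
    case (mult g h) thus ?case using S0_mult by blast
  qed
qed

definition rhoN :: "nat \<Rightarrow> mat2 \<Rightarrow> mat2" where
  "rhoN n g = (\<lambda>a b. (g a b)^n)"

lemma rho_hom: assumes "n > 0" "g \<in> S0 M" "h \<in> S0 M" shows "rhoN n (mmul g h) = mmul (rhoN n g) (rhoN n h)"
proof (intro ext)
  fix a b
  show "rhoN n (mmul g h) a b = mmul (rhoN n g) (rhoN n h) a b"
    using assms unfolding S0_def mmul_def rhoN_def by (cases a; cases b) (auto simp: power_mult_distrib zero_power)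
qed

lemma S0_entries: "g \<in> S0 M \<Longrightarrow> M > 0 \<Longrightarrow> g a b = 0 \<or> g a b ^ (2*M) = 1"
  unfolding S0_def by (cases a; cases b) auto

lemma rho_det: "n > 0 \<Longrightarrow> M > 0 \<Longrightarrow> g \<in> S0 M \<Longrightarrow> mdet (rhoN n g) \<noteq> 0"
  unfolding S0_def mdet_def rhoN_def by (auto simp: zero_power)

lemma pow_mod: "(z::complex)^m = 1 \<Longrightarrow> z^k = z^(k mod m)"
proof -
  assume z: "z^m = 1"
  have "k = m * (k div m) + k mod m" by simp
  hence "z^k = z^(m * (k div m)) * z^(k mod m)" by (metis power_add)
  also have "z^(m * (k div m)) = (z^m)^(k div m)" by (rule power_mult)
  finally show ?thesis using z by simp
qed

lemma root_eq:
  assumes cop: "coprime n (2*M)" and M: "M > 0" and n: "n > 0" and e: "(z::complex)^n = w^n"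
    and z: "z = 0 \<or> z^(2*M) = 1" and w: "w = 0 \<or> w^(2*M) = 1"
  shows "z = w"
proof (cases "z = 0")
  case True
  hence "w^n = 0" using e n by (simp add: zero_power)
  thus ?thesis using True by simp
next
  case False
  hence z1: "z^(2*M) = 1" using z by simp
  have "w \<noteq> 0" using False e n by (metis power_eq_0_iff)
  hence w1: "w^(2*M) = 1" using w by simp
  obtain s where s: "[n * s = 1] (mod (2*M))" using cong_solve_coprime_nat[OF cop] by (metis One_nat_def)
  have m1: "(n * s) mod (2*M) = 1" using s M unfolding cong_def by simp
  have "z = z^((n*s) mod (2*M))" using m1 by simp
  also have "\<dots> = z^(n*s)" using pow_mod[OF z1] by simp
  also have "\<dots> = (w^n)^s" using e by (simp add: power_mult)
  also have "\<dots> = w^((n*s) mod (2*M))" using pow_mod[OF w1, of "n*s"] by (simp add: power_mult)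
  also have "\<dots> = w" using m1 by simp
  finally show ?thesis .
qed

lemma rho_inj:
  assumes "n > 0" "M > 0" "coprime n (2*M)"
  shows "inj_on (rhoN n) (S0 M)"
proof (rule inj_onI)
  fix g h assume g: "g \<in> S0 M" and h: "h \<in> S0 M" and e: "rhoN n g = rhoN n h"
  show "g = h"
  proof (intro ext)
    fix a b
    have "g a b ^ n = h a b ^ n" using e unfolding rhoN_def by (metis)
    thus "g a b = h a b" using root_eq[OF assms(3,2,1)] S0_entries[OF g assms(2)] S0_entries[OF h assms(2)] by blast
  qed
qed

lemma irr:
  assumes k: "M = 4 * k" and X: "sfX \<in> G" and Z: "sfZ \<in> G"
  shows "\<not> (\<exists>v. v \<noteq> (\<lambda>_. 0) \<and> (\<forall>g\<in>G. \<exists>\<mu>. mvec (rhoN (M+3) g) v = (\<lambda>a. \<mu> * v a)))"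
proof
  assume "\<exists>v. v \<noteq> (\<lambda>_. 0) \<and> (\<forall>g\<in>G. \<exists>\<mu>. mvec (rhoN (M+3) g) v = (\<lambda>a. \<mu> * v a))"
  then obtain v where v: "v \<noteq> (\<lambda>_. 0)" and ev: "\<forall>g\<in>G. \<exists>\<mu>. mvec (rhoN (M+3) g) v = (\<lambda>a. \<mu> * v a)" by blast
  have p1: "\<i> ^ (M+3) = - \<i>" "(- \<i>) ^ (M+3) = \<i>" unfolding k by (simp_all add: power_add power_mult numeral_3_eq_3)
  obtain \<mu> where mz: "mvec (rhoN (M+3) sfZ) v = (\<lambda>a. \<mu> * v a)" using ev Z by blast
  obtain \<nu> where mx: "mvec (rhoN (M+3) sfX) v = (\<lambda>a. \<nu> * v a)" using ev X by blast
  have z1: "\<i> * v False = \<mu> * v False" and z2: "- \<i> * v True = \<mu> * v True"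
    using fun_cong[OF mz, of False] fun_cong[OF mz, of True] p1
    by (simp_all add: mvec_def rhoN_def sfZ_def zero_power)
  have x1: "\<i> * v True = \<nu> * v False" and x2: "\<i> * v False = \<nu> * v True"
    using fun_cong[OF mx, of False] fun_cong[OF mx, of True] p1
    by (simp_all add: mvec_def rhoN_def sfX_def zero_power)
  have "v False = 0 \<or> v True = 0"
  proof (rule ccontr)
    assume "\<not> (v False = 0 \<or> v True = 0)"
    hence "\<mu> = \<i>" "\<mu> = - \<i>" using z1 z2 by auto
    thus False by (simp add: complex_eq_iff)
  qed
  hence "v False = 0 \<and> v True = 0" using x1 x2 by auto
  hence "v = (\<lambda>_. 0)" by (auto simp: fun_eq_iff) (metis (full_types))
  thus False using v by simp
qed

lemma prod_split_bool:
  assumes X: "X \<subseteq> {..<n}"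
  shows "(\<Prod>i<n. h (i\<in>X)) = h True ^ card X * h False ^ (n - card X)"
proof -
  have "(\<Prod>i<n. h (i\<in>X)) = (\<Prod>i\<in>{..<n} - X. h (i\<in>X)) * (\<Prod>i\<in>X. h (i\<in>X))"
    by (rule prod.subset_diff[OF X]) simp
  also have "(\<Prod>i\<in>{..<n} - X. h (i\<in>X)) = (\<Prod>i\<in>{..<n} - X. h False)" by (rule prod.cong) auto
  also have "(\<Prod>i\<in>X. h (i\<in>X)) = (\<Prod>i\<in>X. h True)" by (rule prod.cong) auto
  also have "card ({..<n} - X) = n - card X" using X fin_sub[OF X] by (simp add: card_Diff_subset)
  ultimately show ?thesis by (simp add: mult.commute)
qed

lemma tensor_out: "\<not> x < 2^n \<Longrightarrow> tensor_apply n A \<psi> x = 0"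
  unfolding tensor_apply_def by simp

lemma tensor_diag:
  assumes "g False True = 0" "g True False = 0"
  shows "tensor_apply n (\<lambda>_. g) (Wf n H) = Wf n (\<lambda>w. g True True ^ w * g False False ^ (n-w) * H w)"
proof (rule ext)
  fix x
  show "tensor_apply n (\<lambda>_. g) (Wf n H) x = Wf n (\<lambda>w. g True True ^ w * g False False ^ (n-w) * H w) x"
  proof (cases "x < 2^n")
    case False thus ?thesis by (simp add: tensor_out Wf_def)
  next
    case True
    define X where "X = set_decode x"
    have X: "X \<subseteq> {..<n}" unfolding X_def using dec_sub[OF True] .
    have x: "x = set_encode X" unfolding X_def by simp
    have mono: "\<forall>i<n. \<forall>a b. b \<noteq> (a \<noteq> False) \<longrightarrow> g a b = 0"
    proof (intro allI impI)
      fix i a b assume "b \<noteq> (a \<noteq> False)"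
      thus "g a b = 0" using assms by (cases a; cases b) auto
    qed
    have D: "{i. i < n \<and> (i \<in> X) \<noteq> False} = X" using X by auto
    have "tensor_apply n (\<lambda>_. g) (Wf n H) x = (\<Prod>i<n. g (i\<in>X) (i\<in>X)) * H (card X)"
      unfolding x using tensor_mono[OF X mono, of "Wf n H"] D Wf_enc[OF X] by simp
    also have "(\<Prod>i<n. g (i\<in>X) (i\<in>X)) = g True True ^ card X * g False False ^ (n - card X)"
      using prod_split_bool[OF X, of "\<lambda>b. g b b"] by simp
    finally show ?thesis unfolding x Wf_enc[OF X] by simp
  qed
qed

lemma tensor_anti:
  assumes "g False False = 0" "g True True = 0"
  shows "tensor_apply n (\<lambda>_. g) (Wf n H) = Wf n (\<lambda>w. g True False ^ w * g False True ^ (n-w) * H (n - w))"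
proof (rule ext)
  fix x
  show "tensor_apply n (\<lambda>_. g) (Wf n H) x = Wf n (\<lambda>w. g True False ^ w * g False True ^ (n-w) * H (n - w)) x"
  proof (cases "x < 2^n")
    case False thus ?thesis by (simp add: tensor_out Wf_def)
  next
    case True
    define X where "X = set_decode x"
    have X: "X \<subseteq> {..<n}" unfolding X_def using dec_sub[OF True] .
    have x: "x = set_encode X" unfolding X_def by simp
    have mono: "\<forall>i<n. \<forall>a b. b \<noteq> (a \<noteq> True) \<longrightarrow> g a b = 0"
    proof (intro allI impI)
      fix i a b assume "b \<noteq> (a \<noteq> True)"
      thus "g a b = 0" using assms by (cases a; cases b) auto
    qed
    have D: "{i. i < n \<and> (i \<in> X) \<noteq> True} = {..<n} - X" by auto
    have D2: "{..<n} - X \<subseteq> {..<n}" by auto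
    have cD: "card ({..<n} - X) = n - card X" using X fin_sub[OF X] by (simp add: card_Diff_subset)
    have "tensor_apply n (\<lambda>_. g) (Wf n H) x = (\<Prod>i<n. g (i\<in>X) (\<not> (i\<in>X))) * H (n - card X)"
      unfolding x using tensor_mono[OF X mono, of "Wf n H"] D Wf_enc[OF D2] cD by simp
    also have "(\<Prod>i<n. g (i\<in>X) (\<not> (i\<in>X))) = g True False ^ card X * g False True ^ (n - card X)"
      using prod_split_bool[OF X, of "\<lambda>b. g b (\<not> b)"] by simp
    finally show ?thesis unfolding x Wf_enc[OF X] by simp
  qed
qed

lemma Wf_cong: "(\<And>w. w \<le> n \<Longrightarrow> H w = H' w) \<Longrightarrow> Wf n H = Wf n H'"
proof (rule ext)
  fix x assume h: "\<And>w. w \<le> n \<Longrightarrow> H w = H' w"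
  have "hweight n x \<le> n" unfolding hweight_def
    by (metis (no_types, lifting) card_lessThan card_mono finite_lessThan lessThan_iff mem_Collect_eq subsetI)
  thus "Wf n H x = Wf n H' x" unfolding Wf_def using h by simp
qed

lemma lin_Wf: "(\<lambda>x. c * Wf n H x + d * Wf n H' x) = Wf n (\<lambda>w. c * H w + d * H' w)"
  unfolding Wf_def by auto

lemma wd0:
  assumes "u^M = v^M" "w \<le> M+3" "M \<ge> 8"
  shows "v^w * u^(M+3-w) * complex_of_real (f0g a b M w) = u^(M+3) * complex_of_real (f0g a b M w) + 0 * F"
proof -
  consider "w = 0" | "w = M" | "w \<noteq> 0" "w \<noteq> M" by blast
  thus ?thesis
  proof cases
    case 2
    have "v^M * u^3 = u^(M+3)" using assms(1) by (simp add: power_add)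
    thus ?thesis using 2 by simp
  qed (auto simp: f0g_def)
qed

lemma wd1:
  assumes "u^M = v^M" "w \<le> M+3" "M \<ge> 8"
  shows "v^w * u^(M+3-w) * complex_of_real (f1g a b M w) = 0 * F + v^(M+3) * complex_of_real (f1g a b M w)"
proof -
  consider "w = 3" | "w = M+3" | "w \<noteq> 3" "w \<noteq> M+3" by blast
  thus ?thesis
  proof cases
    case 1
    have "v^3 * u^M = v^(M+3)" using assms(1) by (simp add: power_add)
    thus ?thesis using 1 assms by simp
  qed (auto simp: f1g_def)
qed

lemma wa0:
  assumes "p^M = q^M" "w \<le> M+3" "M \<ge> 8"
  shows "q^w * p^(M+3-w) * complex_of_real (f0g a b M (M+3-w)) = 0 * F + q^(M+3) * complex_of_real (f1g a b M w)"
proof -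
  consider "w = 3" | "w = M+3" | "w \<noteq> 3" "w \<noteq> M+3" by blast
  thus ?thesis
  proof cases
    case 1
    have "q^3 * p^M = q^(M+3)" using assms(1) by (simp add: power_add)
    thus ?thesis using 1 assms by (simp add: f0g_def f1g_def)
  next
    case 2 thus ?thesis using assms by (simp add: f0g_def f1g_def)
  next
    case 3
    hence "M + 3 - w \<noteq> 0" "M + 3 - w \<noteq> M" using assms by auto
    thus ?thesis using 3 by (simp add: f0g_def f1g_def)
  qed
qed

lemma wa1:
  assumes "p^M = q^M" "w \<le> M+3" "M \<ge> 8"
  shows "q^w * p^(M+3-w) * complex_of_real (f1g a b M (M+3-w)) = p^(M+3) * complex_of_real (f0g a b M w) + 0 * F"
proof -
  consider "w = 0" | "w = M" | "w \<noteq> 0" "w \<noteq> M" by blast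
  thus ?thesis
  proof cases
    case 2
    have "q^M * p^3 = p^(M+3)" using assms(1) by (simp add: power_add)
    thus ?thesis using 2 assms by (simp add: f0g_def f1g_def)
  next
    case 1 thus ?thesis using assms by (simp add: f0g_def f1g_def)
  next
    case 3
    hence "M + 3 - w \<noteq> 3" "M + 3 - w \<noteq> M + 3" using assms by auto
    thus ?thesis using 3 by (simp add: f0g_def f1g_def)
  qed
qed

lemma trans_eq:
  assumes r: "r \<ge> 3" and g: "g \<in> S0 (2^r)"
  shows "tensor_apply (2^r+3) (\<lambda>_. g) (if j then cw1 r else cw0 r) =
    (\<lambda>x. rhoN (2^r+3) g False j * cw0 r x + rhoN (2^r+3) g True j * cw1 r x)"
proof -
  define M :: nat where "M = 2^r"
  have M8: "M \<ge> 8" unfolding M_def using M8[OF r] .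
  have R: "(\<lambda>x. rhoN (M+3) g False j * cw0 r x + rhoN (M+3) g True j * cw1 r x) =
     Wf (M+3) (\<lambda>w. rhoN (M+3) g False j * F0 r w + rhoN (M+3) g True j * F1 r w)"
    unfolding cw0_W cw1_W M_def by (rule lin_Wf)
  have "tensor_apply (M+3) (\<lambda>_. g) (if j then cw1 r else cw0 r) =
    Wf (M+3) (\<lambda>w. rhoN (M+3) g False j * F0 r w + rhoN (M+3) g True j * F1 r w)"
  proof (cases "g False True = 0 \<and> g True False = 0")
    case True
    hence S: "g False False ^ M = g True True ^ M" using g unfolding S0_def M_def by auto
    show ?thesis
    proof (cases j)
      case False
      show ?thesis unfolding cw0_W cw1_W M_def[symmetric] using False
        by (simp add: tensor_diag[of g, OF conjunct1[OF True] conjunct2[OF True]])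
           (rule Wf_cong, use wd0[OF S _ M8, of _ "al r" "be r" "F1 r _"] True in \<open>simp add: rhoN_def zero_power M_def\<close>)
    next
      case j: True
      show ?thesis unfolding cw0_W cw1_W M_def[symmetric] using j
        by (simp add: tensor_diag[of g, OF conjunct1[OF True] conjunct2[OF True]])
           (rule Wf_cong, use wd1[OF S _ M8, of _ "al r" "be r" "F0 r _"] True in \<open>simp add: rhoN_def zero_power M_def\<close>)
    qed
  next
    case False
    hence Z: "g False False = 0" "g True True = 0" and S: "g False True ^ M = g True False ^ M"
      using g unfolding S0_def M_def by auto
    show ?thesis
    proof (cases j)
      case False
      show ?thesis unfolding cw0_W cw1_W M_def[symmetric] using False
        by (simp add: tensor_anti[of g, OF Z])
           (rule Wf_cong, use wa0[OF S _ M8, of _ "al r" "be r" "F0 r _"] Z in \<open>simp add: rhoN_def zero_power M_def\<close>)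
    next
      case j: True
      show ?thesis unfolding cw0_W cw1_W M_def[symmetric] using j
        by (simp add: tensor_anti[of g, OF Z])
           (rule Wf_cong, use wa1[OF S _ M8, of _ "al r" "be r" "F1 r _"] Z in \<open>simp add: rhoN_def zero_power M_def\<close>)
    qed
  qed
  thus ?thesis using R unfolding M_def by simp
qed

theorem part_trans:
  assumes r: "r \<ge> 3"
  shows "transversal (2^r + 3) (\<lambda>j. if j then cw1 r else cw0 r) (quatgroup r)"
proof -
  let ?n = "2^r + 3 :: nat"
  let ?G = "quatgroup r"
  have GS: "?G \<subseteq> S0 (2^r)" by (rule quat_S0[OF r])
  have n0: "?n > 0" by simp
  have M0: "(2::nat)^r > 0" by simp
  have odd: "odd ?n" using r by simp
  have cop: "coprime ?n (2 * 2^r)"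
  proof -
    have "coprime ?n (2^Suc r)" using odd by simp
    thus ?thesis by simp
  qed
  obtain k where k: "(2::nat)^r = 4 * k"
  proof -
    have "r = (r - 2) + 2" using r by simp
    hence "(2::nat)^r = 2^(r-2) * 2^2" by (metis power_add)
    thus ?thesis using that[of "2^(r-2)"] by simp
  qed
  have XG: "sfX \<in> ?G" and ZG: "sfZ \<in> ?G" unfolding quatgroup_def by (auto intro: mgen.base)
  have fi: "faithful_irrep2 ?G (rhoN ?n)"
    unfolding faithful_irrep2_def
  proof (intro conjI ballI)
    fix g h assume "g \<in> ?G" "h \<in> ?G"
    thus "rhoN ?n (mmul g h) = mmul (rhoN ?n g) (rhoN ?n h)" using GS rho_hom[OF n0] by blast
  next
    fix g assume "g \<in> ?G"
    thus "mdet (rhoN ?n g) \<noteq> 0" using GS rho_det[OF n0 M0] by blast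
  next
    show "inj_on (rhoN ?n) ?G" by (rule inj_on_subset[OF rho_inj[OF n0 M0 cop] GS])
  next
    show "\<not> (\<exists>v. v \<noteq> (\<lambda>_. 0) \<and> (\<forall>g\<in>?G. \<exists>\<mu>. mvec (rhoN ?n g) v = (\<lambda>a. \<mu> * v a)))"
      using irr[OF k XG ZG] .
  qed
  show ?thesis unfolding transversal_def
  proof (intro conjI exI[of _ "rhoN ?n"] ballI allI)
    show "orthonormal_list ?n [if False then cw1 r else cw0 r, if True then cw1 r else cw0 r]"
      using ortho[OF r] by simp
    show "faithful_irrep2 ?G (rhoN ?n)" by (rule fi)
  next
    fix g j assume "g \<in> ?G"
    hence "g \<in> S0 (2^r)" using GS by blast
    thus "tensor_apply ?n (\<lambda>_. g) (if j then cw1 r else cw0 r) =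
      (\<lambda>x. rhoN ?n g False j * (if False then cw1 r else cw0 r) x + rhoN ?n g True j * (if True then cw1 r else cw0 r) x)"
      using trans_eq[OF r] by simp
  qed
qed

lemma al_pos: "r \<ge> 3 \<Longrightarrow> al r > 0"
proof -
  assume r: "r \<ge> 3"
  have "(2::real)^r \<ge> 8" using M8[OF r] by (metis of_nat_le_iff of_nat_numeral of_nat_power)
  thus ?thesis unfolding al_def by simp
qed

lemma be_pos: "be r > 0"
proof -
  have "real ((2^r+3) choose 3) > 0" by simp
  moreover have "(0::real) < 2^r + 3" by (metis add_pos_pos zero_less_numeral zero_less_power)
  ultimately show ?thesis unfolding be_def by (intro mult_pos_pos divide_pos_pos) simp_all
qed

lemma cw0_enc: "X \<subseteq> {..<2^r+3} \<Longrightarrow> cw0 r (set_encode X) = F0 r (card X)"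
  unfolding cw0_W by (rule Wf_enc)

lemma cw1_enc: "X \<subseteq> {..<2^r+3} \<Longrightarrow> cw1 r (set_encode X) = F1 r (card X)"
  unfolding cw1_W by (rule Wf_enc)

lemma pauli_mono: "\<forall>i<n. \<forall>a b. b \<noteq> (a \<noteq> (p i = 1 \<or> p i = 2)) \<longrightarrow> pauli1 (p i) a b = 0"
proof (intro allI impI)
  fix i a b assume "b \<noteq> (a \<noteq> (p i = 1 \<or> p i = 2))"
  thus "pauli1 (p i) a b = 0" unfolding pauli1_def by (cases a; cases b) auto
qed

lemma noflip:
  assumes r: "r \<ge> 3" and fix0: "\<forall>x. c * pauli_op (2^r+3) p (cw0 r) x = cw0 r x"
  shows "\<forall>i<2^r+3. p i \<noteq> 1 \<and> p i \<noteq> 2"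
proof -
  define n :: nat where "n = 2^r+3"
  define M :: nat where "M = 2^r"
  have M8: "M \<ge> 8" unfolding M_def using M8[OF r] .
  have nM: "n = M + 3" unfolding n_def M_def by simp
  define F where "F = {i. i < n \<and> (p i = 1 \<or> p i = 2)}"
  have FU: "F \<subseteq> {..<n}" unfolding F_def by auto
  have act: "pauli_op n p (cw0 r) (set_encode X) =
     (\<Prod>i<n. pauli1 (p i) (i\<in>X) ((i\<in>X) \<noteq> (p i = 1 \<or> p i = 2))) * cw0 r (set_encode {i. i<n \<and> (i\<in>X) \<noteq> (p i = 1 \<or> p i = 2)})"
    if "X \<subseteq> {..<n}" for X
    unfolding pauli_op_def by (rule tensor_mono[OF that pauli_mono])
  have c0: "cw0 r (set_encode X) = F0 r (card X)" if "X \<subseteq> {..<n}" for X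
    using cw0_enc that unfolding n_def by blast
  have "c * pauli_op n p (cw0 r) (set_encode {}) = cw0 r (set_encode {})" using fix0 unfolding n_def by blast
  hence "c * ((\<Prod>i<n. pauli1 (p i) False (p i = 1 \<or> p i = 2)) * cw0 r (set_encode F)) = complex_of_real (al r)"
    using act[of "{}"] c0[of "{}"] unfolding F_def by (simp add: f0g_def)
  hence "cw0 r (set_encode F) \<noteq> 0" using al_pos[OF r] by auto
  hence "f0g (al r) (be r) (2^r) (card F) \<noteq> 0" using c0[OF FU] by simp
  hence cF: "card F = 0 \<or> card F = M" unfolding f0g_def M_def by (auto split: if_splits)
  have "F = {}"
  proof (rule ccontr)
    assume Fne: "F \<noteq> {}"
    hence cFM: "card F = M" using cF fin_sub[OF FU] by auto
    obtain a where a: "a \<in> F" using Fne by blast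
    have "card ({..<n} - F) = n - M" using cFM FU fin_sub[OF FU] by (simp add: card_Diff_subset)
    hence "card ({..<n} - F) = 3" using nM by simp
    hence "{..<n} - F \<noteq> {}" by (metis card.empty zero_neq_numeral)
    then obtain b where b: "b \<in> {..<n}" "b \<notin> F" by blast
    define X where "X = insert b (F - {a})"
    have XU: "X \<subseteq> {..<n}" unfolding X_def using FU b by auto
    have cX: "card X = M" unfolding X_def using cFM a b fin_sub[OF FU] M8
      by (simp add: card_Diff_singleton)
    have ab: "a \<noteq> b" using a b by auto
    have aU: "a < n" using a FU by auto
    have D: "{i. i<n \<and> (i\<in>X) \<noteq> (p i = 1 \<or> p i = 2)} = {a, b}"
      using a ab aU b unfolding X_def F_def by auto
    have "c * pauli_op n p (cw0 r) (set_encode X) = cw0 r (set_encode X)" using fix0 unfolding n_def by blast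
    hence "c * ((\<Prod>i<n. pauli1 (p i) (i\<in>X) ((i\<in>X) \<noteq> (p i = 1 \<or> p i = 2))) * F0 r (card {a,b})) = F0 r M"
      using act[OF XU] c0[OF XU] c0[of "{a,b}"] D cX aU b by simp
    moreover have "f0g (al r) (be r) (2^r) (card {a,b}) = 0" using ab M8 unfolding f0g_def M_def by simp
    moreover have "f0g (al r) (be r) (2^r) M = be r" using M8 unfolding f0g_def M_def by simp
    ultimately show False using be_pos[of r] by simp
  qed
  thus ?thesis unfolding F_def n_def by auto
qed

lemma diag_action:
  assumes nf: "\<forall>i<n. p i \<noteq> 1 \<and> p i \<noteq> 2" and X: "X \<subseteq> {..<n}"
  shows "pauli_op n p \<psi> (set_encode X) = (\<Prod>i\<in>X. (if p i = 3 then -1 else 1)) * \<psi> (set_encode X)"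
proof -
  have D: "{i. i<n \<and> (i\<in>X) \<noteq> (p i = 1 \<or> p i = 2)} = X" using nf X by fastforce
  have "pauli_op n p \<psi> (set_encode X) = (\<Prod>i<n. pauli1 (p i) (i\<in>X) (i\<in>X)) * \<psi> (set_encode X)"
    unfolding pauli_op_def using tensor_mono[OF X pauli_mono[of n p]] D nf by simp
  also have "(\<Prod>i<n. pauli1 (p i) (i\<in>X) (i\<in>X)) = (\<Prod>i\<in>{..<n} - X. pauli1 (p i) (i\<in>X) (i\<in>X)) * (\<Prod>i\<in>X. pauli1 (p i) (i\<in>X) (i\<in>X))"
    by (rule prod.subset_diff[OF X]) simp
  also have "(\<Prod>i\<in>{..<n} - X. pauli1 (p i) (i\<in>X) (i\<in>X)) = 1"
    using nf by (intro prod.neutral) (auto simp: pauli1_def)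
  also have "(\<Prod>i\<in>X. pauli1 (p i) (i\<in>X) (i\<in>X)) = (\<Prod>i\<in>X. (if p i = 3 then -1 else 1))"
    using nf X by (intro prod.cong refl) (auto simp: pauli1_def)
  finally show ?thesis by simp
qed

lemma no_Z0:
  assumes r: "r \<ge> 3" and nf: "\<forall>i<2^r+3. p i \<noteq> 1 \<and> p i \<noteq> 2"
    and fix1: "\<forall>x. pauli_op (2^r+3) p (cw1 r) x = cw1 r x"
  shows "p 0 \<noteq> 3"
proof
  assume p0: "p 0 = 3"
  define n :: nat where "n = 2^r+3"
  define d where "d = (\<lambda>i. if p i = 3 then -1 else (1::complex))"
  have M8: "(2::nat)^r \<ge> 8" using M8[OF r] .
  have P1: "(\<Prod>i\<in>X. d i) = 1" if X: "X \<subseteq> {..<n}" "card X = 3" for X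
  proof -
    have "pauli_op n p (cw1 r) (set_encode X) = cw1 r (set_encode X)" using fix1 unfolding n_def by blast
    hence "(\<Prod>i\<in>X. d i) * cw1 r (set_encode X) = cw1 r (set_encode X)"
      using diag_action[OF nf[folded n_def] X(1)] unfolding d_def by simp
    moreover have "cw1 r (set_encode X) = complex_of_real (be r)"
      using cw1_enc[of X r] X unfolding n_def by (simp add: f1g_def)
    ultimately show ?thesis using be_pos[of r] by simp
  qed
  have n5: "n \<ge> 5" unfolding n_def using M8 by simp
  show False
  proof (cases "\<exists>c. c < n \<and> c \<noteq> 0 \<and> p c \<noteq> 3")
    case True
    then obtain c where c: "c < n" "c \<noteq> 0" "p c \<noteq> 3" by blast
    have "card ({..<n} - {0, c}) = n - 2" using c by (simp add: card_Diff_subset)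
    hence "2 \<le> card ({..<n} - {0, c})" using n5 by simp
    then obtain A where A: "A \<subseteq> {..<n} - {0, c}" "card A = 2" "finite A"
      by (rule obtain_subset_with_card_n)
    have nA: "0 \<notin> A" "c \<notin> A" using A(1) by auto
    have "(\<Prod>i\<in>insert 0 A. d i) = 1" using A c n5 nA by (intro P1) auto
    hence e1: "d 0 * (\<Prod>i\<in>A. d i) = 1" using A nA by simp
    have "(\<Prod>i\<in>insert c A. d i) = 1" using A c n5 nA by (intro P1) auto
    hence e2: "d c * (\<Prod>i\<in>A. d i) = 1" using A nA by simp
    have "d 0 = -1" "d c = 1" using p0 c unfolding d_def by auto
    thus False using e1 e2 by simp
  next
    case False
    hence all3: "\<forall>c<n. p c = 3" using p0 by auto
    have "(\<Prod>i\<in>{0,1,2}. d i) = 1" using n5 by (intro P1) auto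
    moreover have "(\<Prod>i\<in>{0,1,2}. d i) = -1" using all3 n5 unfolding d_def by simp
    ultimately show False by simp
  qed
qed

theorem part_nonstab:
  assumes r: "r \<ge> 3"
  shows "\<not> stabilizer_code (2^r + 3) (cspan_list [cw0 r, cw1 r])"
proof
  define n :: nat where "n = 2^r+3"
  assume "stabilizer_code (2^r + 3) (cspan_list [cw0 r, cw1 r])"
  then obtain S where SG: "stabilizer_group n S"
    and C: "cspan_list [cw0 r, cw1 r] = {\<psi>. supported n \<psi> \<and> (\<forall>g\<in>S. g \<psi> = \<psi>)}"
    unfolding stabilizer_code_def n_def by blast
  have "cw0 r \<in> {Wf (2^r+3) (Gc r c0 c1) | c0 c1. True}" unfolding cw0_G by blast
  hence in0: "cw0 r \<in> cspan_list [cw0 r, cw1 r]" unfolding code_set .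
  have "cw1 r \<in> {Wf (2^r+3) (Gc r c0 c1) | c0 c1. True}" unfolding cw1_G by blast
  hence in1: "cw1 r \<in> cspan_list [cw0 r, cw1 r]" unfolding code_set .
  define e :: qstate where "e = (\<lambda>x. if x = 1 then 1 else 0)"
  have n1: "(1::nat) < 2^n" unfolding n_def by (intro one_less_power) auto
  have e1: "set_encode {0} = 1" by simp
  have eS: "e \<in> {\<psi>. supported n \<psi> \<and> (\<forall>g\<in>S. g \<psi> = \<psi>)}"
  proof (intro CollectI conjI ballI)
    show "supported n e" unfolding supported_def e_def using n1 by auto
  next
    fix g assume gS: "g \<in> S"
    have g0: "g (cw0 r) = cw0 r" and g1: "g (cw1 r) = cw1 r" using gS in0 in1 C by auto
    obtain k p where g: "g = (\<lambda>\<psi> x. \<i> ^ k * pauli_op n p \<psi> x)"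
      using gS SG unfolding stabilizer_group_def pauli_group_def by blast
    have fix0: "\<forall>x. \<i> ^ k * pauli_op (2^r+3) p (cw0 r) x = cw0 r x"
      using g0 unfolding g n_def by (metis)
    have nf: "\<forall>i<n. p i \<noteq> 1 \<and> p i \<noteq> 2" using noflip[OF r fix0] unfolding n_def .
    have ik: "\<i> ^ k = 1"
    proof -
      have "\<i> ^ k * pauli_op n p (cw0 r) (set_encode {}) = cw0 r (set_encode {})"
        using fix0 unfolding n_def by blast
      hence "\<i> ^ k * cw0 r (set_encode {}) = cw0 r (set_encode {})"
        using diag_action[OF nf, of "{}"] by simp
      moreover have "cw0 r (set_encode {}) = complex_of_real (al r)"
        using cw0_enc[of "{}" r] by (simp add: f0g_def)
      ultimately show ?thesis using al_pos[OF r] by simp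
    qed
    have fix1: "\<forall>x. pauli_op (2^r+3) p (cw1 r) x = cw1 r x"
      using g1 ik unfolding g n_def by (metis mult_1)
    have p0: "p 0 \<noteq> 3" using no_Z0[OF r nf[unfolded n_def] fix1] .
    show "g e = e"
    proof (rule ext)
      fix x
      show "g e x = e x"
      proof (cases "x < 2^n")
        case False
        hence "x \<noteq> 1" using n1 by auto
        thus ?thesis using False unfolding g e_def pauli_op_def by (simp add: tensor_out)
      next
        case True
        define X where "X = set_decode x"
        have X: "X \<subseteq> {..<n}" unfolding X_def using dec_sub[OF True] .
        have x: "x = set_encode X" unfolding X_def by simp
        have "g e x = (\<Prod>i\<in>X. (if p i = 3 then -1 else 1)) * e x"
          unfolding g x using diag_action[OF nf X] ik by simp
        moreover have "(\<Prod>i\<in>X. (if p i = 3 then -1 else (1::complex))) * e x = e x"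
        proof (cases "x = 1")
          case True
          hence "X = {0}" unfolding X_def using e1 by (metis set_encode_inverse finite.emptyI finite_insert)
          thus ?thesis using p0 by simp
        next
          case False thus ?thesis unfolding e_def by simp
        qed
        ultimately show ?thesis by simp
      qed
    qed
  qed
  hence "e \<in> cspan_list [cw0 r, cw1 r]" using C by simp
  then obtain c0 c1 where ec: "e = Wf (2^r+3) (Gc r c0 c1)" unfolding code_set by blast
  have "e (set_encode {0}) = Gc r c0 c1 1"
    unfolding ec by (subst Wf_enc) auto
  moreover have "Gc r c0 c1 1 = 0" using M8[OF r] unfolding Gc_def f0g_def f1g_def by simp
  moreover have "e (set_encode {0}) = 1" unfolding e_def by simp
  ultimately show False by simp
qed

theorem mainTheorem7:
  fixes r :: nat
  assumes "r \<ge> 3"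
  shows "qcode (2^r + 3) 2 3 (cspan_list [cw0 r, cw1 r]) \<and>
         \<not> stabilizer_code (2^r + 3) (cspan_list [cw0 r, cw1 r]) \<and>
         perm_invariant (2^r + 3) (cspan_list [cw0 r, cw1 r]) \<and>
         transversal (2^r + 3) (\<lambda>j. if j then cw1 r else cw0 r) (quatgroup r)"
  using part_qcode[OF assms] part_nonstab[OF assms] part_perm[of r] part_trans[OF assms] by blast

end
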